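(* With the setting in the context, the ground state subspace $\mathcal H_0$ is spanned by vectors of the form $|f_G\rangle:=\mathcal A_0|f\rangle$ with $f\in\mathrm{hom}(C,G)^0$; moreover, for $f\in\mathrm{hom}(C,G)^0$, one has $\mathcal A_0|f\rangle\in\mathcal H_0$ if and only if $f\in\ker(\delta^0)$.
   Context: $(C_\bullet,\partial^C_\bullet)$ is a chain complex with each $C_n$ free abelian on a finite set $K_n$, $K_n\ne\emptyset$ for finitely many $n$; $(G_\bullet,\partial^G_\bullet)$ is a chain complex of finite abelian groups. $\mathrm{hom}(C,G)^p=\prod_n\mathrm{Hom}(C_n,G_{n-p})$ with $(\delta^pf)_n=f_{n-1}\partial^C_n-(-1)^p\partial^G_{n-p}f_n$. $\mathrm{hom}(C,G)_p=\mathrm{Hom}(\mathrm{hom}(C,G)^p,U(1))$ (written additively), $\chi_m(f)=m(f)$, $\delta_{p+1}m=m\circ\delta^p$. $\mathcal H=\bigotimes_n\bigotimes_{x\in K_n}\mathbb C[G_n]$ with orthonormal basis $|f\rangle$, $f\in\mathrm{hom}(C,G)^0$. $P_t|f\rangle=|f+t\rangle$, $Q_m|f\rangle=\chi_m(f)|f\rangle$; $A_t=P_{\delta^{-1}t}$ ($t\in\mathrm{hom}(C,G)^{-1}$), $B_m=Q_{\delta_1m}$ ($m\in\mathrm{hom}(C,G)_1$). $\mathcal A_0=\frac1{|\mathrm{hom}(C,G)^{-1}|}\sum_{t}A_t$. Local elements: for $x\in K_n$, $g\in G_{n-p}$, $gx^*\in\mathrm{hom}(C,G)^p$ has $n$-th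 component sending $x\mapsto g$ and other basis elements to $0$, other components $0$; for $r\in\mathrm{Hom}(G_{n-p},U(1))$, $rx_*(f)=r(f_n(x))$. $A_x^0=\frac1{|G_{n+1}|}\sum_{h\in G_{n+1}}A_{hx^*}$, $B_x^0=\frac1{|G_{n-1}|}\sum_{r\in\mathrm{Hom}(G_{n-1},U(1))}B_{rx_*}$ for $x\in K_n$; the ground state subspace is $\mathcal H_0=\{\Psi: A_x^0\Psi=B_x^0\Psi=\Psi\ \forall n,\forall x\in K_n\}$. *)

theory Defs
  imports Complex_Main
begin

text \<open>The chain complex C is given by finite bases K n (C_n is free
  abelian on K n) and its boundary by integer matrix coefficients dC n x y = coefficient
  of y (in K (n-1)) in the boundary of x (in K n).  A homomorphism C_n -> G_m is given by
  its values on the basis K n.  The finite abelian groups G_n are subgroups G n of one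
  ambient abelian group type 'g, with boundary maps dG n : G n -> G (n-1).
  A cochain f in hom(C,G)^p is a function f n x (n degree, x basis element) with
  f n x in G (n-p) for x in K n and f n x = 0 otherwise.\<close>

definition zsmul :: "int \<Rightarrow> 'a::ab_group_add \<Rightarrow> 'a" where
  "zsmul k a = (if 0 \<le> k then ((+) a ^^ nat k) 0 else - (((+) a ^^ nat (- k)) 0))"

definition cochains :: "(int \<Rightarrow> 'k set) \<Rightarrow> (int \<Rightarrow> 'g::ab_group_add set) \<Rightarrow> int
    \<Rightarrow> (int \<Rightarrow> 'k \<Rightarrow> 'g) set" where
  "cochains K G p = {f. \<forall>n x. (x \<in> K n \<longrightarrow> f n x \<in> G (n - p)) \<and> (x \<notin> K n \<longrightarrow> f n x = 0)}"

text \<open>(f_{n-1} o boundary^C_n)(x) for x in K n\<close>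
definition compC :: "(int \<Rightarrow> 'k set) \<Rightarrow> (int \<Rightarrow> 'k \<Rightarrow> 'k \<Rightarrow> int) \<Rightarrow> int
    \<Rightarrow> (int \<Rightarrow> 'k \<Rightarrow> 'g::ab_group_add) \<Rightarrow> 'k \<Rightarrow> 'g" where
  "compC K dC n f x = (\<Sum>y\<in>K (n - 1). zsmul (dC n x y) (f (n - 1) y))"

text \<open>(delta^p f)_n = f_{n-1} boundary^C_n - (-1)^p boundary^G_{n-p} f_n\<close>
definition delta :: "(int \<Rightarrow> 'k set) \<Rightarrow> (int \<Rightarrow> 'k \<Rightarrow> 'k \<Rightarrow> int) \<Rightarrow> (int \<Rightarrow> 'g \<Rightarrow> 'g)
    \<Rightarrow> int \<Rightarrow> (int \<Rightarrow> 'k \<Rightarrow> 'g::ab_group_add) \<Rightarrow> (int \<Rightarrow> 'k \<Rightarrow> 'g)" where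
  "delta K dC dG p f = (\<lambda>n x. if x \<in> K n then
      (if even p then compC K dC n f x - dG (n - p) (f n x)
                 else compC K dC n f x + dG (n - p) (f n x))
    else 0)"

text \<open>Vectors of the Hilbert space: complex functions on configurations, vanishing
  outside hom(C,G)^0 (coefficients w.r.t. the orthonormal basis |f>).\<close>
definition Hspace :: "(int \<Rightarrow> 'k set) \<Rightarrow> (int \<Rightarrow> 'g::ab_group_add set)
    \<Rightarrow> ((int \<Rightarrow> 'k \<Rightarrow> 'g) \<Rightarrow> complex) set" where
  "Hspace K G = {\<Psi>. \<forall>g. g \<notin> cochains K G 0 \<longrightarrow> \<Psi> g = 0}"

definition ket :: "'c \<Rightarrow> ('c \<Rightarrow> complex)" where
  "ket f = (\<lambda>g. if g = f then 1 else 0)"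

text \<open>P_t |f> = |f + t>\<close>
definition Pop :: "(int \<Rightarrow> 'k \<Rightarrow> 'g::ab_group_add) \<Rightarrow> ((int \<Rightarrow> 'k \<Rightarrow> 'g) \<Rightarrow> complex)
    \<Rightarrow> ((int \<Rightarrow> 'k \<Rightarrow> 'g) \<Rightarrow> complex)" where
  "Pop t \<Psi> = (\<lambda>g. \<Psi> (\<lambda>n x. g n x - t n x))"

definition Qop :: "('c \<Rightarrow> complex) \<Rightarrow> ('c \<Rightarrow> complex) \<Rightarrow> ('c \<Rightarrow> complex)" where
  "Qop m \<Psi> = (\<lambda>g. m g * \<Psi> g)"

definition Aop where
  "Aop K dC dG t = Pop (delta K dC dG (-1) t)"

definition Bop where
  "Bop K dC dG m = Qop (\<lambda>f. m (delta K dC dG 0 f))"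

definition A0 where
  "A0 K G dC dG \<Psi> = (\<lambda>g. (1 / of_nat (card (cochains K G (-1)))) *
      (\<Sum>t\<in>cochains K G (-1). Aop K dC dG t \<Psi> g))"

text \<open>Characters Hom(S, U(1)) of a finite subgroup S (extended by 1 outside S)\<close>
definition chars :: "'g::ab_group_add set \<Rightarrow> ('g \<Rightarrow> complex) set" where
  "chars S = {r. (\<forall>a\<in>S. \<forall>b\<in>S. r (a + b) = r a * r b) \<and> (\<forall>a\<in>S. cmod (r a) = 1)
                 \<and> (\<forall>a. a \<notin> S \<longrightarrow> r a = 1)}"

definition locdual :: "'g::zero \<Rightarrow> int \<Rightarrow> 'k \<Rightarrow> (int \<Rightarrow> 'k \<Rightarrow> 'g)" where
  "locdual h n x = (\<lambda>m y. if m = n \<and> y = x then h else 0)"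

definition locchar :: "('g \<Rightarrow> complex) \<Rightarrow> int \<Rightarrow> 'k \<Rightarrow> ((int \<Rightarrow> 'k \<Rightarrow> 'g) \<Rightarrow> complex)" where
  "locchar r n x = (\<lambda>f. r (f n x))"

definition Ax0 where
  "Ax0 K G dC dG n x \<Psi> = (\<lambda>g. (1 / of_nat (card (G (n + 1)))) *
      (\<Sum>h\<in>G (n + 1). Aop K dC dG (locdual h n x) \<Psi> g))"

definition Bx0 where
  "Bx0 K G dC dG n x \<Psi> = (\<lambda>g. (1 / of_nat (card (G (n - 1)))) *
      (\<Sum>r\<in>chars (G (n - 1)). Bop K dC dG (locchar r n x) \<Psi> g))"

definition H0 where
  "H0 K G dC dG = {\<Psi> \<in> Hspace K G. \<forall>n x. x \<in> K n \<longrightarrow>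
      Ax0 K G dC dG n x \<Psi> = \<Psi> \<and> Bx0 K G dC dG n x \<Psi> = \<Psi>}"

definition cspan :: "('c \<Rightarrow> complex) set \<Rightarrow> ('c \<Rightarrow> complex) set" where
  "cspan S = {\<Psi>. \<exists>A c. finite A \<and> A \<subseteq> S \<and> \<Psi> = (\<lambda>g. \<Sum>v\<in>A. c v * v g)}"

end

theory Submission
  imports Defs "HOL-Library.FuncSet"
begin

lemma zsmul_succ: "zsmul (k + 1) a = zsmul k a + a"
proof -
  have N: "((+) a ^^ Suc j) 0 = a + ((+) a ^^ j) 0" for j by simp
  consider "k \<ge> 0" | "k = -1" | "k \<le> -2" by linarith
  then show ?thesis
  proof cases
    case 1
    then have "nat (k+1) = Suc (nat k)" by simp
    then show ?thesis using 1 by (simp add: zsmul_def N add.commute)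
  next
    case 2 then show ?thesis by (simp add: zsmul_def)
  next
    case 3
    then have "nat (-k) = Suc (nat (-(k+1)))" by simp
    then show ?thesis using 3 by (simp add: zsmul_def N)
  qed
qed

lemma zsmul_pred: "zsmul (k - 1) a = zsmul k a - a"
  using zsmul_succ[of "k - 1" a] by (simp add: algebra_simps)

lemma zsmul_0 [simp]: "zsmul 0 a = 0" by (simp add: zsmul_def)

lemma zsmul_add: "zsmul (k + l) a = zsmul k a + zsmul l a"
proof (induction l rule: int_induct[where k=0])
  case base then show ?case by simp
next
  case (step1 i)
  have "zsmul (k + (i + 1)) a = zsmul ((k + i) + 1) a" by (simp only: add.assoc)
  also have "\<dots> = zsmul k a + zsmul i a + a" by (simp only: zsmul_succ step1)
  also have "\<dots> = zsmul k a + zsmul (i + 1) a" by (simp only: zsmul_succ add.assoc)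
  finally show ?case .
next
  case (step2 i)
  have "zsmul (k + (i - 1)) a = zsmul ((k + i) - 1) a" by (simp only: add_diff_eq)
  also have "\<dots> = zsmul k a + zsmul i a - a" by (simp only: zsmul_pred step2)
  also have "\<dots> = zsmul k a + zsmul (i - 1) a" by (simp only: zsmul_pred add_diff_eq)
  finally show ?case .
qed

lemma zsmul_distrib: "zsmul k (a + b) = zsmul k a + zsmul k b"
proof (induction k rule: int_induct[where k=0])
  case base then show ?case by simp
next
  case (step1 i) then show ?case by (simp only: zsmul_succ) (simp add: ac_simps)
next
  case (step2 i) then show ?case by (simp only: zsmul_pred) (simp add: algebra_simps)
qed

lemma zsmul_zero [simp]: "zsmul k 0 = 0"
  using zsmul_distrib[of k 0 0] by simp

lemma zsmul_mult: "zsmul (k * l) a = zsmul k (zsmul l a)"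
proof (induction k rule: int_induct[where k=0])
  case base then show ?case by simp
next
  case (step1 i)
  have "zsmul ((i + 1) * l) a = zsmul (i * l + l) a" by (simp add: distrib_right)
  also have "\<dots> = zsmul i (zsmul l a) + zsmul l a" by (simp only: zsmul_add step1)
  also have "\<dots> = zsmul (i + 1) (zsmul l a)" by (simp only: zsmul_succ)
  finally show ?case .
next
  case (step2 i)
  have "zsmul ((i - 1) * l) a = zsmul (i * l + - l) a" by (simp add: algebra_simps)
  also have "\<dots> = zsmul i (zsmul l a) + zsmul (- l) a" by (simp only: zsmul_add step2)
  also have "zsmul (- l) a = - zsmul l a" using zsmul_add[of l "-l" a] by (simp add: eq_neg_iff_add_eq_0 add.commute)
  also have "zsmul i (zsmul l a) + - zsmul l a = zsmul (i - 1) (zsmul l a)" by (simp only: zsmul_pred) simp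
  finally show ?case .
qed

lemma zsmul_sum: "zsmul k (\<Sum>y\<in>A. f y) = (\<Sum>y\<in>A. zsmul k (f y))"
  by (induction A rule: infinite_finite_induct) (simp_all add: zsmul_distrib)

lemma zsmul_sum_left: "(\<Sum>y\<in>A. zsmul (f y) a) = zsmul (\<Sum>y\<in>A. f y) a"
  by (induction A rule: infinite_finite_induct) (simp_all add: zsmul_add)

lemma zsmul_closed:
  assumes "0 \<in> S" "\<And>a b. a \<in> S \<Longrightarrow> b \<in> S \<Longrightarrow> a + b \<in> S" "\<And>a. a \<in> S \<Longrightarrow> - a \<in> S" "a \<in> S"
  shows "zsmul k a \<in> S"
proof (induction k rule: int_induct[where k=0])
  case base then show ?case using assms by simp
next
  case (step1 i) then show ?case using assms(2)[OF step1(2) assms(4)] by (simp add: zsmul_succ)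
next
  case (step2 i)
  have "zsmul (i - 1) a = zsmul i a + - a" by (simp add: zsmul_pred)
  then show ?case using assms(2)[OF step2(2) assms(3)[OF assms(4)]] by simp
qed

lemma zsmul_hom:
  assumes "0 \<in> S" "\<And>a b. a \<in> S \<Longrightarrow> b \<in> S \<Longrightarrow> a + b \<in> S" "\<And>a. a \<in> S \<Longrightarrow> - a \<in> S" "a \<in> S"
    and hadd: "\<And>a b. a \<in> S \<Longrightarrow> b \<in> S \<Longrightarrow> h (a + b) = h a + h b"
  shows "h (zsmul k a) = zsmul k (h a)"
proof -
  have h0: "h 0 = 0" using hadd[of 0 0] assms(1) by simp
  have hneg: "h (- b) = - h b" if "b \<in> S" for b
    using hadd[of b "-b"] that assms(3) h0 by (simp add: eq_neg_iff_add_eq_0 add.commute)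
  have cl: "zsmul j a \<in> S" for j using zsmul_closed assms(1-4) by blast
  show ?thesis
  proof (induction k rule: int_induct[where k=0])
    case base then show ?case using h0 by simp
  next
    case (step1 i) then show ?case using zsmul_succ[of i a] zsmul_succ[of i "h a"] hadd[OF cl assms(4)] by simp
  next
    case (step2 i)
    have "h (zsmul (i - 1) a) = h (zsmul i a + - a)" by (simp add: zsmul_pred)
    also have "\<dots> = h (zsmul i a) + h (- a)" by (rule hadd[OF cl assms(3)[OF assms(4)]])
    also have "\<dots> = zsmul i (h a) + - h a" using step2(2) hneg[OF assms(4)] by simp
    also have "\<dots> = zsmul (i - 1) (h a)" by (simp add: zsmul_pred)
    finally show ?case .
  qed
qed

definition sg :: "'g::ab_group_add set \<Rightarrow> bool" where
  "sg H \<longleftrightarrow> 0 \<in> H \<and> (\<forall>a\<in>H. \<forall>b\<in>H. a + b \<in> H) \<and> (\<forall>a\<in>H. - a \<in> H)"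

lemma sgD: assumes "sg H" shows "0 \<in> H" "a \<in> H \<Longrightarrow> b \<in> H \<Longrightarrow> a + b \<in> H" "a \<in> H \<Longrightarrow> - a \<in> H"
    "a \<in> H \<Longrightarrow> b \<in> H \<Longrightarrow> a - b \<in> H"
  using assms unfolding sg_def diff_conv_add_uminus by blast+

fun nm :: "nat \<Rightarrow> 'g::ab_group_add \<Rightarrow> 'g" where
  "nm 0 a = 0" | "nm (Suc k) a = a + nm k a"

lemma nm_add: "nm (i + j) a = nm i a + nm j a"
  by (induction i) (simp_all add: add.assoc)

lemma nm_mult: "nm (i * j) a = nm i (nm j a)"
  by (induction i) (simp_all add: nm_add)

lemma nm_closed: "sg H \<Longrightarrow> a \<in> H \<Longrightarrow> nm k a \<in> H"
  by (induction k) (auto dest: sgD)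

definition restr :: "'g set \<Rightarrow> ('g \<Rightarrow> complex) \<Rightarrow> ('g \<Rightarrow> complex)" where
  "restr H r = (\<lambda>a. if a \<in> H then r a else 1)"

definition fiber where
  "fiber S H \<chi> = {r \<in> chars S. restr H r = \<chi>}"

lemma charsD: assumes "r \<in> chars S"
  shows "a \<in> S \<Longrightarrow> b \<in> S \<Longrightarrow> r (a + b) = r a * r b" "a \<in> S \<Longrightarrow> cmod (r a) = 1"
    "a \<notin> S \<Longrightarrow> r a = 1"
  using assms unfolding chars_def by auto

lemma chars_nz: "r \<in> chars S \<Longrightarrow> r a \<noteq> 0"
  by (cases "a \<in> S") (auto dest: charsD)

lemma chars_0: assumes "r \<in> chars S" "sg S" shows "r 0 = 1"
proof -
  have "r 0 = r 0 * r 0" using charsD(1)[OF assms(1), of 0 0] sgD(1)[OF assms(2)] by simp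
  then show ?thesis using chars_nz[OF assms(1), of 0] by simp
qed

lemma chars_nm: assumes "r \<in> chars S" "sg S" "a \<in> S" shows "r (nm k a) = r a ^ k"
  by (induction k) (simp_all add: chars_0[OF assms(1,2)] charsD(1)[OF assms(1)] assms(3) nm_closed[OF assms(2,3)])

lemma restr_chars: assumes "r \<in> chars S" "H \<subseteq> S" "sg H" shows "restr H r \<in> chars H"
  unfolding chars_def restr_def
proof (intro CollectI conjI ballI allI impI)
  fix a b assume "a \<in> H" "b \<in> H"
  then show "(if a + b \<in> H then r (a + b) else 1) = (if a \<in> H then r a else 1) * (if b \<in> H then r b else 1)"
    using sgD(2)[OF assms(3)] charsD(1)[OF assms(1)] subsetD[OF assms(2)] by simp
next
  fix a assume "a \<in> H"
  then show "cmod (if a \<in> H then r a else 1) = 1" using assms charsD(2)[OF assms(1)] by auto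
qed simp

lemma restr_restr: "H \<subseteq> H' \<Longrightarrow> restr H (restr H' r) = restr H r"
  unfolding restr_def by (rule ext) auto

lemma restr_self: "r \<in> chars S \<Longrightarrow> restr S r = r"
  unfolding restr_def by (rule ext) (auto dest: charsD)

lemma one_step:
  assumes S: "finite S" "sg S" and H: "sg H" "H \<subseteq> S" and s: "s \<in> S" "s \<notin> H"
  shows "\<exists>H' m. sg H' \<and> H \<subseteq> H' \<and> s \<in> H' \<and> H' \<subseteq> S \<and> card H' = m * card H \<and> 0 < m
     \<and> (\<forall>j. 0 < j \<and> j < m \<longrightarrow> nm j s \<notin> H) \<and> nm m s \<in> H
     \<and> (\<forall>\<chi>\<in>chars H. card (fiber H' H \<chi>) = m \<and> finite (fiber H' H \<chi>)
          \<and> (\<forall>\<omega>. \<omega> ^ m = \<chi> (nm m s) \<longrightarrow> (\<exists>\<chi>'\<in>fiber H' H \<chi>. \<chi>' s = \<omega>)))"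
proof -
  have sS: "nm k s \<in> S" for k using nm_closed[OF S(2) s(1)] .
  have "\<not> inj_on (\<lambda>j. nm j s) {0..card S}"
  proof
    assume "inj_on (\<lambda>j. nm j s) {0..card S}"
    then have "card ((\<lambda>j. nm j s) ` {0..card S}) = card {0..card S}" by (rule card_image)
    moreover have "card ((\<lambda>j. nm j s) ` {0..card S}) \<le> card S"
      using sS S(1) by (intro card_mono) auto
    ultimately show False by simp
  qed
  then obtain i0 j0 where ij0: "i0 \<noteq> j0" "nm i0 s = nm j0 s"
    unfolding inj_on_def by blast
  define i where "i = min i0 j0"
  define j where "j = max i0 j0"
  have ij: "i < j" "nm i s = nm j s" using ij0 unfolding i_def j_def by (auto simp: min_def max_def)
  have "nm j s = nm i s + nm (j - i) s" using nm_add[of i "j - i" s] ij(1) by simp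
  then have "nm (j - i) s = 0" using ij(2) by simp
  then have ex: "0 < j - i \<and> nm (j - i) s \<in> H" using ij(1) sgD(1)[OF H(1)] by simp
  define m where "m = (LEAST k. 0 < k \<and> nm k s \<in> H)"
  have m: "0 < m" "nm m s \<in> H" using LeastI_ex[of "\<lambda>k. 0 < k \<and> nm k s \<in> H"] ex
    unfolding m_def by blast+
  have mmin: "nm j s \<notin> H" if "0 < j" "j < m" for j
    using not_less_Least[of j "\<lambda>k. 0 < k \<and> nm k s \<in> H"] that unfolding m_def by blast
  have mdvd: "m dvd j" if "nm j s \<in> H" for j
  proof -
    have "nm j s = nm (j div m * m) s + nm (j mod m) s" using nm_add[of "j div m * m" "j mod m" s] by simp
    also have "nm (j div m * m) s = nm (j div m) (nm m s)" by (rule nm_mult)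
    finally have "nm (j mod m) s = nm j s - nm (j div m) (nm m s)" by (simp add: algebra_simps)
    then have "nm (j mod m) s \<in> H" using sgD(4)[OF H(1) that nm_closed[OF H(1) m(2)]] by simp
    then have "j mod m = 0" using mmin[of "j mod m"] m(1) by (meson mod_less_divisor not_gr_zero)
    then show ?thesis by auto
  qed
  define H' where "H' = {a. \<exists>h\<in>H. \<exists>k. a = h + nm k s}"
  have HH': "H \<subseteq> H'"
  proof
    fix h assume "h \<in> H" then show "h \<in> H'" unfolding H'_def by (intro CollectI bexI[of _ h] exI[of _ 0]) auto
  qed
  have sH': "s \<in> H'" unfolding H'_def using sgD(1)[OF H(1)] by (intro CollectI bexI[of _ 0] exI[of _ 1]) auto
  have H'S: "H' \<subseteq> S" unfolding H'_def using H(2) sS sgD(2)[OF S(2)] by blast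
  have sgH': "sg H'"
    unfolding sg_def
  proof (intro conjI ballI)
    show "0 \<in> H'" using HH' sgD(1)[OF H(1)] by blast
  next
    fix a b assume "a \<in> H'" "b \<in> H'"
    then obtain h1 k1 h2 k2 where "h1 \<in> H" "h2 \<in> H" "a = h1 + nm k1 s" "b = h2 + nm k2 s"
      unfolding H'_def by blast
    then show "a + b \<in> H'" unfolding H'_def using sgD(2)[OF H(1)]
      by (intro CollectI bexI[of _ "h1 + h2"] exI[of _ "k1 + k2"]) (auto simp: nm_add ac_simps)
  next
    fix a assume "a \<in> H'"
    then obtain h k where hk: "h \<in> H" "a = h + nm k s" unfolding H'_def by blast
    have km: "k \<le> k * m" using m(1) by simp
    have e: "nm (k * m) s = nm (k * m - k) s + nm k s" using nm_add[of "k * m - k" k s] km by simp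
    have e': "nm k (nm m s) = nm (k * m - k) s + nm k s" using e nm_mult[of k m s] by simp
    have "- a = (- h - nm k (nm m s)) + nm (k * m - k) s"
      unfolding hk(2) e' by (simp add: algebra_simps)
    moreover have "- h - nm k (nm m s) \<in> H"
      using sgD[OF H(1)] hk(1) nm_closed[OF H(1) m(2)] by blast
    ultimately show "- a \<in> H'" unfolding H'_def by blast
  qed
  have finH: "finite H" "finite H'" using H(2) H'S S(1) finite_subset by auto
  have cardH': "card H' = m * card H"
  proof -
    have "bij_betw (\<lambda>(h, k). h + nm k s) (H \<times> {..<m}) H'"
      unfolding bij_betw_def
    proof
      show "inj_on (\<lambda>(h, k). h + nm k s) (H \<times> {..<m})"
      proof (rule inj_onI, clarsimp)
        fix h1 k1 h2 k2 assume a: "h1 \<in> H" "k1 < m" "h2 \<in> H" "k2 < m" "h1 + nm k1 s = h2 + nm k2 s"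
        have "k1 = k2"
        proof (rule ccontr)
          assume "k1 \<noteq> k2"
          then consider "k1 < k2" | "k2 < k1" by linarith
          then show False
          proof cases
            case 1
            have e: "nm k2 s = nm k1 s + nm (k2 - k1) s" using nm_add[of k1 "k2 - k1" s] 1 by simp
            have "h1 + nm k1 s = (h2 + nm (k2 - k1) s) + nm k1 s" unfolding a(5) e by (simp only: ac_simps)
            then have "h1 = h2 + nm (k2 - k1) s" by (simp only: add_right_cancel)
            then have "nm (k2 - k1) s = h1 - h2" by (simp add: algebra_simps)
            then have "nm (k2 - k1) s \<in> H" using sgD(4)[OF H(1) a(1,3)] by simp
            then show False using mmin[of "k2 - k1"] 1 a by simp
          next
            case 2
            have e: "nm k1 s = nm k2 s + nm (k1 - k2) s" using nm_add[of k2 "k1 - k2" s] 2 by simp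
            have "h2 + nm k2 s = (h1 + nm (k1 - k2) s) + nm k2 s" unfolding a(5)[symmetric] e by (simp only: ac_simps)
            then have "h2 = h1 + nm (k1 - k2) s" by (simp only: add_right_cancel)
            then have "nm (k1 - k2) s = h2 - h1" by (simp add: algebra_simps)
            then have "nm (k1 - k2) s \<in> H" using sgD(4)[OF H(1) a(3,1)] by simp
            then show False using mmin[of "k1 - k2"] 2 a by simp
          qed
        qed
        then show "h1 = h2 \<and> k1 = k2" using a(5) by simp
      qed
    next
      show "(\<lambda>(h, k). h + nm k s) ` (H \<times> {..<m}) = H'"
      proof
        show "(\<lambda>(h, k). h + nm k s) ` (H \<times> {..<m}) \<subseteq> H'"
        proof clarify
          fix h k assume "h \<in> H" then show "h + nm k s \<in> H'" unfolding H'_def by blast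
        qed
      next
        show "H' \<subseteq> (\<lambda>(h, k). h + nm k s) ` (H \<times> {..<m})"
        proof
          fix a assume "a \<in> H'"
          then obtain h k where hk: "h \<in> H" "a = h + nm k s" unfolding H'_def by blast
          have e: "nm k s = nm (k div m * m) s + nm (k mod m) s" using nm_add[of "k div m * m" "k mod m" s] by simp
          have e2: "nm (k div m * m) s = nm (k div m) (nm m s)" by (rule nm_mult)
          have "a = (h + nm (k div m) (nm m s)) + nm (k mod m) s" unfolding hk(2) e e2
            by (simp only: ac_simps)
          moreover have "h + nm (k div m) (nm m s) \<in> H" using sgD(2)[OF H(1) hk(1) nm_closed[OF H(1) m(2)]] .
          moreover have "k mod m < m" using m(1) by simp
          ultimately show "a \<in> (\<lambda>(h, k). h + nm k s) ` (H \<times> {..<m})"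
            by (intro rev_image_eqI[of "(h + nm (k div m) (nm m s), k mod m)"]) auto
        qed
      qed
    qed
    then have "card H' = card (H \<times> {..<m})" by (simp add: bij_betw_same_card)
    then show ?thesis using finH by (simp add: card_cartesian_product)
  qed
  have fib: "card (fiber H' H \<chi>) = m \<and> finite (fiber H' H \<chi>)
          \<and> (\<forall>\<omega>. \<omega> ^ m = \<chi> (nm m s) \<longrightarrow> (\<exists>\<chi>'\<in>fiber H' H \<chi>. \<chi>' s = \<omega>))" if chi: "\<chi> \<in> chars H" for \<chi>
  proof -
    define R where "R = {\<omega>. \<omega> ^ m = \<chi> (nm m s)}"
    define ext where "ext \<omega> = (\<lambda>a. if a \<in> H' then \<chi> (a - nm (SOME k. a - nm k s \<in> H) s) * \<omega> ^ (SOME k. a - nm k s \<in> H) else 1)" for \<omega>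
    have wd: "\<chi> (a - nm k s) * \<omega> ^ k = \<chi> (a - nm k' s) * \<omega> ^ k'"
      if "\<omega> \<in> R" "a - nm k s \<in> H" "a - nm k' s \<in> H" for \<omega> a k k'
    proof -
      have gen: "\<chi> (a - nm k s) * \<omega> ^ k = \<chi> (a - nm k' s) * \<omega> ^ k'"
        if "\<omega> \<in> R" "a - nm k s \<in> H" "a - nm k' s \<in> H" "k \<le> k'" for k k'
      proof -
        have e: "nm k' s = nm k s + nm (k' - k) s" using nm_add[of k "k' - k" s] that(4) by simp
        then have "nm (k' - k) s = (a - nm k s) - (a - nm k' s)" by (simp add: algebra_simps)
        then have "nm (k' - k) s \<in> H" using sgD(4)[OF H(1) that(2,3)] by simp
        then obtain q where q: "k' - k = m * q" using mdvd by blast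
        have e2: "nm (k' - k) s = nm q (nm m s)" using q nm_mult[of q m s] by (simp add: mult.commute)
        have "a - nm k s = (a - nm k' s) + nm q (nm m s)"
          by (simp add: e e2 algebra_simps)
        then have "\<chi> (a - nm k s) = \<chi> ((a - nm k' s) + nm q (nm m s))" by (rule arg_cong)
        also have "\<dots> = \<chi> (a - nm k' s) * \<chi> (nm q (nm m s))"
          by (rule charsD(1)[OF chi that(3) nm_closed[OF H(1) m(2)]])
        also have "\<chi> (nm q (nm m s)) = \<chi> (nm m s) ^ q" by (rule chars_nm[OF chi H(1) m(2)])
        also have "\<chi> (nm m s) ^ q = \<omega> ^ (m * q)" using that(1) unfolding R_def by (simp add: power_mult)
        finally have "\<chi> (a - nm k s) * \<omega> ^ k = \<chi> (a - nm k' s) * \<omega> ^ (k + m * q)"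
          by (simp add: power_add)
        moreover have "k + m * q = k'" using q that(4) by linarith
        ultimately show ?thesis by simp
      qed
      show ?thesis
      proof (cases "k \<le> k'")
        case True then show ?thesis using gen[OF that(1) that(2) that(3)] by blast
      next
        case False then have "k' \<le> k" by simp
        then show ?thesis using gen[OF that(1) that(3) that(2)] by (metis sym)
      qed
    qed
    have ext_eq: "ext \<omega> a = \<chi> (a - nm k s) * \<omega> ^ k" if "\<omega> \<in> R" "a - nm k s \<in> H" for \<omega> a k
    proof -
      have "a \<in> H'" using that(2) unfolding H'_def by (intro CollectI bexI[of _ "a - nm k s"] exI[of _ k]) auto
      moreover have "a - nm (SOME k. a - nm k s \<in> H) s \<in> H" using someI[of "\<lambda>k. a - nm k s \<in> H"] that(2) .
      ultimately show ?thesis unfolding ext_def using wd[OF that(1) _ that(2)] by simp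
    qed
    have inH': "\<exists>k. a - nm k s \<in> H" if aH: "a \<in> H'" for a
    proof -
      obtain h k where "h \<in> H" "a = h + nm k s" using aH unfolding H'_def by blast
      then have "a - nm k s \<in> H" by simp
      then show ?thesis by blast
    qed
    have normR: "cmod \<omega> = 1" if "\<omega> \<in> R" for \<omega>
    proof -
      have "\<omega> ^ m = \<chi> (nm m s)" using that unfolding R_def by simp
      then have "cmod (\<omega> ^ m) = 1" using charsD(2)[OF chi m(2)] by simp
      then have "cmod \<omega> ^ m = 1" by (simp add: norm_power)
      then show ?thesis using m(1) by (intro power_eq_imp_eq_base[of _ m 1]) auto
    qed
    have ext_in: "ext \<omega> \<in> fiber H' H \<chi>" if w: "\<omega> \<in> R" for \<omega>
    proof -
      have "ext \<omega> \<in> chars H'"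
        unfolding chars_def
      proof (intro CollectI conjI ballI allI impI)
        fix a b assume ab: "a \<in> H'" "b \<in> H'"
        obtain ka kb where k: "a - nm ka s \<in> H" "b - nm kb s \<in> H" using inH' ab by blast
        have eq: "(a + b) - nm (ka + kb) s = (a - nm ka s) + (b - nm kb s)" by (simp add: nm_add algebra_simps)
        have abH: "(a + b) - nm (ka + kb) s \<in> H" unfolding eq using sgD(2)[OF H(1) k] .
        have "ext \<omega> (a + b) = \<chi> ((a + b) - nm (ka + kb) s) * \<omega> ^ (ka + kb)" by (rule ext_eq[OF w abH])
        also have "\<dots> = (\<chi> (a - nm ka s) * \<omega> ^ ka) * (\<chi> (b - nm kb s) * \<omega> ^ kb)"
          unfolding eq charsD(1)[OF chi k] by (simp add: power_add ac_simps)
        also have "\<dots> = ext \<omega> a * ext \<omega> b" using ext_eq[OF w k(1)] ext_eq[OF w k(2)] by simp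
        finally show "ext \<omega> (a + b) = ext \<omega> a * ext \<omega> b" .
      next
        fix a assume "a \<in> H'"
        then obtain k where k: "a - nm k s \<in> H" using inH' by blast
        then show "cmod (ext \<omega> a) = 1" using ext_eq[OF w k] charsD(2)[OF chi k] normR[OF w]
          by (simp add: norm_mult norm_power)
      next
        fix a assume "a \<notin> H'" then show "ext \<omega> a = 1" unfolding ext_def by simp
      qed
      moreover have "restr H (ext \<omega>) = \<chi>"
      proof
        fix a show "restr H (ext \<omega>) a = \<chi> a"
          using ext_eq[OF w, of a 0] charsD(3)[OF chi, of a] unfolding restr_def by auto
      qed
      ultimately show ?thesis unfolding fiber_def by simp
    qed
    have ext_s: "ext \<omega> s = \<omega>" if "\<omega> \<in> R" for \<omega>
      using ext_eq[OF that, of s 1] chars_0[OF chi H(1)] sgD(1)[OF H(1)] by simp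
    have fib_eq: "fiber H' H \<chi> = ext ` R"
    proof
      show "ext ` R \<subseteq> fiber H' H \<chi>" using ext_in by blast
    next
      show "fiber H' H \<chi> \<subseteq> ext ` R"
      proof
        fix r assume r: "r \<in> fiber H' H \<chi>"
        then have rc: "r \<in> chars H'" and rr: "restr H r = \<chi>" unfolding fiber_def by auto
        have rH: "r h = \<chi> h" if hH: "h \<in> H" for h
        proof -
          have "restr H r h = \<chi> h" using rr by simp
          then show ?thesis using hH unfolding restr_def by simp
        qed
        have w: "r s \<in> R" unfolding R_def
          using chars_nm[OF rc sgH' sH', of m] rH[OF m(2)] by simp
        have "r = ext (r s)"
        proof
          fix a show "r a = ext (r s) a"
          proof (cases "a \<in> H'")
            case True
            then obtain k where k: "a - nm k s \<in> H" using inH' by blast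
            have "r a = r ((a - nm k s) + nm k s)" by simp
            also have "\<dots> = r (a - nm k s) * r (nm k s)"
              by (rule charsD(1)[OF rc]) (use HH' k nm_closed[OF sgH' sH'] in auto)
            finally have "r a = r (a - nm k s) * r (nm k s)" .
            then show ?thesis using ext_eq[OF w k] rH[OF k] chars_nm[OF rc sgH' sH'] by simp
          next
            case False then show ?thesis using charsD(3)[OF rc] unfolding ext_def by simp
          qed
        qed
        then show "r \<in> ext ` R" using w by blast
      qed
    qed
    have inj: "inj_on ext R" by (rule inj_onI) (metis ext_s)
    have cnz: "\<chi> (nm m s) \<noteq> 0" using chars_nz[OF chi] .
    have finR: "finite R" unfolding R_def using m(1) by (rule finite_nth_roots)
    have cR: "card R = m" unfolding R_def by (rule card_nth_roots[OF cnz m(1)])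
    have "card (fiber H' H \<chi>) = m" using fib_eq card_image[OF inj] cR by simp
    moreover have "finite (fiber H' H \<chi>)" using fib_eq finR by simp
    moreover have "\<exists>\<chi>'\<in>fiber H' H \<chi>. \<chi>' s = \<omega>" if "\<omega> ^ m = \<chi> (nm m s)" for \<omega>
    proof -
      have "\<omega> \<in> R" using that unfolding R_def by simp
      then show ?thesis using ext_in ext_s by blast
    qed
    ultimately show ?thesis by blast
  qed
  show ?thesis
    apply (rule exI[of _ H'], rule exI[of _ m])
    using sgH' HH' sH' H'S cardH' m mmin fib by simp
qed

lemma fiber_card:
  assumes S: "finite S" "sg S"
  shows "sg H \<Longrightarrow> H \<subseteq> S \<Longrightarrow> \<chi> \<in> chars H \<Longrightarrow> card S = card H * card (fiber S H \<chi>)"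
proof (induction "card (S - H)" arbitrary: H \<chi> rule: less_induct)
  case less
  show ?case
  proof (cases "H = S")
    case True
    have "fiber S H \<chi> = {\<chi>}"
      unfolding fiber_def using True less.prems(3) restr_self by auto
    then show ?thesis using True by simp
  next
    case False
    then obtain s where s: "s \<in> S" "s \<notin> H" using less.prems(2) by blast
    obtain H' m where H': "sg H'" "H \<subseteq> H'" "s \<in> H'" "H' \<subseteq> S" "card H' = m * card H" "0 < m"
      and fib: "\<And>\<chi>. \<chi> \<in> chars H \<Longrightarrow> card (fiber H' H \<chi>) = m \<and> finite (fiber H' H \<chi>)"
      using one_step[OF S less.prems(1,2) s] by blast
    have lt: "card (S - H') < card (S - H)"
      using S(1) H' s by (intro psubset_card_mono) auto
    have IH: "card S = card H' * card (fiber S H' \<chi>')" if "\<chi>' \<in> chars H'" for \<chi>'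
      using less.hyps[OF lt H'(1) H'(4) that] .
    have cH'pos: "0 < card H'" using H'(1) H'(4) S(1) finite_subset sgD(1) card_gt_0_iff by blast
    define f' where "f' = card S div card H'"
    have fc: "card (fiber S H' \<chi>') = f'" if "\<chi>' \<in> chars H'" for \<chi>'
      using IH[OF that] cH'pos unfolding f'_def by simp
    have cSpos: "0 < card S" using S sgD(1) card_gt_0_iff by blast
    have "fiber H' H \<chi> \<noteq> {}" using fib[OF less.prems(3)] H'(6) by (metis card.empty less_irrefl)
    then obtain \<chi>0 where "\<chi>0 \<in> fiber H' H \<chi>" by blast
    then have c0: "\<chi>0 \<in> chars H'" unfolding fiber_def by simp
    have cSf: "card S = card H' * f'" using IH[OF c0] fc[OF c0] by simp
    have fpos: "0 < f'" using cSf cSpos by simp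
    have eq: "fiber S H \<chi> = (\<Union>\<chi>'\<in>fiber H' H \<chi>. fiber S H' \<chi>')"
    proof
      show "fiber S H \<chi> \<subseteq> (\<Union>\<chi>'\<in>fiber H' H \<chi>. fiber S H' \<chi>')"
      proof
        fix r assume r: "r \<in> fiber S H \<chi>"
        then have rc: "r \<in> chars S" and rr: "restr H r = \<chi>" unfolding fiber_def by auto
        have "restr H' r \<in> fiber H' H \<chi>" unfolding fiber_def
          using restr_chars[OF rc H'(4) H'(1)] restr_restr[OF H'(2)] rr by simp
        moreover have "r \<in> fiber S H' (restr H' r)" unfolding fiber_def using rc by simp
        ultimately show "r \<in> (\<Union>\<chi>'\<in>fiber H' H \<chi>. fiber S H' \<chi>')" by blast
      qed
    next
      show "(\<Union>\<chi>'\<in>fiber H' H \<chi>. fiber S H' \<chi>') \<subseteq> fiber S H \<chi>"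
      proof clarify
        fix \<chi>' r assume a: "\<chi>' \<in> fiber H' H \<chi>" "r \<in> fiber S H' \<chi>'"
        then have "restr H \<chi>' = \<chi>" "restr H' r = \<chi>'" "r \<in> chars S" unfolding fiber_def by auto
        then show "r \<in> fiber S H \<chi>" unfolding fiber_def using restr_restr[OF H'(2), of r] by simp
      qed
    qed
    have fin: "finite (fiber S H' \<chi>')" if "\<chi>' \<in> chars H'" for \<chi>'
      using fc[OF that] fpos card_ge_0_finite by blast
    have "card (fiber S H \<chi>) = (\<Sum>\<chi>'\<in>fiber H' H \<chi>. card (fiber S H' \<chi>'))"
      unfolding eq
    proof (rule card_UN_disjoint)
      show "finite (fiber H' H \<chi>)" using fib[OF less.prems(3)] by blast
      show "\<forall>i\<in>fiber H' H \<chi>. finite (fiber S H' i)" using fin unfolding fiber_def by blast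
      show "\<forall>i\<in>fiber H' H \<chi>. \<forall>j\<in>fiber H' H \<chi>. i \<noteq> j \<longrightarrow> fiber S H' i \<inter> fiber S H' j = {}"
        unfolding fiber_def by blast
    qed
    also have "\<dots> = (\<Sum>\<chi>'\<in>fiber H' H \<chi>. f')" using fc unfolding fiber_def by (intro sum.cong) auto
    also have "\<dots> = m * f'" using fib[OF less.prems(3)] by simp
    finally have "card (fiber S H \<chi>) = m * f'" .
    then show ?thesis using H'(5) cSf by simp
  qed
qed

lemma sg_zero: "sg {0::'g::ab_group_add}" unfolding sg_def by simp

lemma triv_chars: "(\<lambda>_. 1) \<in> chars S" unfolding chars_def by simp

lemma char_card: assumes "finite S" "sg S" shows "card (chars S) = card S"
proof -
  have "{0} \<subseteq> S" using sgD(1)[OF assms(2)] by simp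
  have "fiber S {0} (\<lambda>_. 1) = chars S"
    unfolding fiber_def restr_def using chars_0[OF _ assms(2)] by (auto intro!: ext)
  then show ?thesis using fiber_card[OF assms sg_zero \<open>{0} \<subseteq> S\<close> triv_chars] by simp
qed

lemma char_sep: fixes a :: "'g::ab_group_add" assumes "finite S" "sg S" "a \<in> S" "a \<noteq> 0" shows "\<exists>r\<in>chars S. r a \<noteq> 1"
proof -
  have z: "{0} \<subseteq> S" using sgD(1)[OF assms(2)] by simp
  have nz: "a \<notin> {0}" using assms(4) by simp
  obtain H' m where P: "sg H' \<and> {0} \<subseteq> H' \<and> a \<in> H' \<and> H' \<subseteq> S \<and> card H' = m * card {0::'g} \<and> 0 < m
     \<and> (\<forall>j. 0 < j \<and> j < m \<longrightarrow> nm j a \<notin> {0}) \<and> nm m a \<in> {0}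
     \<and> (\<forall>\<chi>\<in>chars {0}. card (fiber H' {0} \<chi>) = m \<and> finite (fiber H' {0} \<chi>)
          \<and> (\<forall>\<omega>. \<omega> ^ m = \<chi> (nm m a) \<longrightarrow> (\<exists>\<chi>'\<in>fiber H' {0} \<chi>. \<chi>' a = \<omega>)))"
    using one_step[OF assms(1,2) sg_zero z assms(3) nz] by (elim exE) iprover
  have H': "sg H'" "a \<in> H'" "H' \<subseteq> S" "0 < m" using P by simp_all
  have mm: "nm m a \<in> {0}" using P by simp
  have fib: "\<forall>\<omega>. \<omega> ^ m = 1 \<longrightarrow> (\<exists>\<chi>'\<in>fiber H' {0} (\<lambda>_. 1). \<chi>' a = \<omega>)"
  proof -
    have F: "\<forall>\<chi>\<in>chars {0::'g}. card (fiber H' {0} \<chi>) = m \<and> finite (fiber H' {0} \<chi>)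
          \<and> (\<forall>\<omega>. \<omega> ^ m = \<chi> (nm m a) \<longrightarrow> (\<exists>\<chi>'\<in>fiber H' {0} \<chi>. \<chi>' a = \<omega>))"
      using P by (elim conjE) assumption
    have "card (fiber H' {0} (\<lambda>_. 1)) = m \<and> finite (fiber H' {0} (\<lambda>_. 1))
          \<and> (\<forall>\<omega>. \<omega> ^ m = 1 \<longrightarrow> (\<exists>\<chi>'\<in>fiber H' {0} (\<lambda>_. 1). \<chi>' a = \<omega>))"
      using F[rule_format, OF triv_chars] by simp
    then show ?thesis by (elim conjE)
  qed
  have "m \<noteq> 1" using assms(4) mm by auto
  then have m2: "1 < m" using H'(4) by simp
  have "card {z::complex. z ^ m = 1} = m" using card_roots_unity_eq[OF H'(4)] .
  then have "{z::complex. z ^ m = 1} \<noteq> {1}" using m2 by auto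
  moreover have "1 \<in> {z::complex. z ^ m = 1}" by simp
  ultimately obtain \<omega> :: complex where w: "\<omega> ^ m = 1" "\<omega> \<noteq> 1" by blast
  obtain \<chi>' where c': "\<chi>' \<in> fiber H' {0} (\<lambda>_. 1)" "\<chi>' a = \<omega>" using fib w(1) by blast
  then have c'c: "\<chi>' \<in> chars H'" unfolding fiber_def by simp
  have "card S = card H' * card (fiber S H' \<chi>')" using fiber_card[OF assms(1,2) H'(1,3) c'c] .
  moreover have "0 < card S" using assms(1,3) card_gt_0_iff by blast
  ultimately have "fiber S H' \<chi>' \<noteq> {}" by auto
  then obtain r where "r \<in> chars S" and rr: "restr H' r = \<chi>'" unfolding fiber_def by blast
  have "restr H' r a = \<chi>' a" using rr by simp
  then have "r a = \<omega>" using c'(2) H'(2) unfolding restr_def by simp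
  then show ?thesis using \<open>r \<in> chars S\<close> w(2) by blast
qed


lemma chars_mult: assumes "r0 \<in> chars S" "r \<in> chars S" shows "(\<lambda>b. r0 b * r b) \<in> chars S"
  using assms unfolding chars_def by (auto simp: norm_mult)

lemma chars_cnj: assumes "r0 \<in> chars S" shows "(\<lambda>b. cnj (r0 b)) \<in> chars S"
  using assms unfolding chars_def by auto

lemma chars_cnj_mult: assumes "r0 \<in> chars S" shows "cnj (r0 b) * r0 b = 1"
proof -
  have n: "cmod (r0 b) = 1" using assms unfolding chars_def by (cases "b \<in> S") auto
  have "r0 b * cnj (r0 b) = of_real ((cmod (r0 b))\<^sup>2)" by (rule complex_norm_square[symmetric])
  then show ?thesis using n by (simp add: mult.commute)
qed

lemma char_sum: assumes "finite S" "sg S" "a \<in> S"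
  shows "(\<Sum>r\<in>chars S. r a) = (if a = 0 then of_nat (card S) else 0)"
proof (cases "a = 0")
  case True
  have "(\<Sum>r\<in>chars S. r a) = (\<Sum>r\<in>chars S. 1)" using True chars_0[OF _ assms(2)] by (intro sum.cong) auto
  then show ?thesis using True char_card[OF assms(1,2)] by simp
next
  case False
  obtain r0 where r0: "r0 \<in> chars S" "r0 a \<noteq> 1" using char_sep[OF assms False] by blast
  have "(\<Sum>r\<in>chars S. r0 a * r a) = (\<Sum>r\<in>chars S. r a)"
  proof (rule sum.reindex_bij_witness[where j = "\<lambda>r b. r0 b * r b" and i = "\<lambda>r b. cnj (r0 b) * r b"])
    fix r assume "r \<in> chars S"
    show "(\<lambda>b. cnj (r0 b) * (r0 b * r b)) = r"
      using chars_cnj_mult[OF r0(1)] by (simp add: mult.assoc[symmetric])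
    show "(\<lambda>b. r0 b * r b) \<in> chars S" by (rule chars_mult[OF r0(1) \<open>r \<in> chars S\<close>])
    show "(\<lambda>b. r0 b * (cnj (r0 b) * r b)) = r"
      using chars_cnj_mult[OF r0(1)] by (simp add: mult.assoc[symmetric] mult.commute)
    show "(\<lambda>b. cnj (r0 b) * r b) \<in> chars S" by (rule chars_mult[OF chars_cnj[OF r0(1)] \<open>r \<in> chars S\<close>])
    show "r0 a * r a = r0 a * r a" by simp
  qed
  then have "r0 a * (\<Sum>r\<in>chars S. r a) = (\<Sum>r\<in>chars S. r a)" by (simp add: sum_distrib_left)
  then have "(r0 a - 1) * (\<Sum>r\<in>chars S. r a) = 0" by (simp add: algebra_simps)
  then show ?thesis using r0(2) False by simp
qed

locale tcx =
  fixes K :: "int \<Rightarrow> 'k set" and dC :: "int \<Rightarrow> 'k \<Rightarrow> 'k \<Rightarrow> int"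
    and G :: "int \<Rightarrow> 'g::ab_group_add set" and dG :: "int \<Rightarrow> 'g \<Rightarrow> 'g"
  assumes K_fin: "\<And>n. finite (K n)"
    and K_supp: "finite {n. K n \<noteq> {}}"
    and dC_sq: "\<And>n x z. x \<in> K n \<Longrightarrow> z \<in> K (n - 2) \<Longrightarrow>
                 (\<Sum>y\<in>K (n - 1). dC n x y * dC (n - 1) y z) = 0"
    and G_fin: "\<And>n. finite (G n)"
    and G_zero: "\<And>n. 0 \<in> G n"
    and G_add: "\<And>n a b. a \<in> G n \<Longrightarrow> b \<in> G n \<Longrightarrow> a + b \<in> G n"
    and G_neg: "\<And>n a. a \<in> G n \<Longrightarrow> - a \<in> G n"
    and dG_maps: "\<And>n a. a \<in> G n \<Longrightarrow> dG n a \<in> G (n - 1)"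
    and dG_add: "\<And>n a b. a \<in> G n \<Longrightarrow> b \<in> G n \<Longrightarrow> dG n (a + b) = dG n a + dG n b"
    and dG_sq: "\<And>n a. a \<in> G n \<Longrightarrow> dG (n - 1) (dG n a) = 0"
begin

abbreviation "C0 \<equiv> cochains K G 0"
abbreviation "Cm \<equiv> cochains K G (-1)"
abbreviation "d0 \<equiv> delta K dC dG 0"
abbreviation "dm \<equiv> delta K dC dG (-1)"

lemma sgG: "sg (G n)" unfolding sg_def using G_zero G_add G_neg by blast

lemma dG_0: "dG n 0 = 0"
  using dG_add[OF G_zero G_zero, of n] by simp

lemma G_sum: "(\<And>y. y \<in> A \<Longrightarrow> f y \<in> G n) \<Longrightarrow> sum f A \<in> G n"
  by (induction A rule: infinite_finite_induct) (auto simp: G_zero G_add)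

lemma dG_sum: "(\<And>y. y \<in> A \<Longrightarrow> f y \<in> G n) \<Longrightarrow> dG n (sum f A) = (\<Sum>y\<in>A. dG n (f y))"
proof (induction A rule: infinite_finite_induct)
  case (infinite A) then show ?case by (simp add: dG_0)
next
  case empty then show ?case by (simp add: dG_0)
next
  case (insert y F)
  then show ?case using dG_add[of "f y" n "sum f F"] G_sum[of F f n] by simp
qed

lemma zsmul_G: "a \<in> G n \<Longrightarrow> zsmul k a \<in> G n"
  by (rule zsmul_closed[OF G_zero G_add G_neg])

lemma dG_zsmul: "a \<in> G n \<Longrightarrow> dG n (zsmul k a) = zsmul k (dG n a)"
  by (rule zsmul_hom[OF G_zero G_add G_neg _ dG_add])

lemma coch_in: "f \<in> cochains K G p \<Longrightarrow> x \<in> K n \<Longrightarrow> f n x \<in> G (n - p)"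
  unfolding cochains_def by blast

lemma coch_out: "f \<in> cochains K G p \<Longrightarrow> x \<notin> K n \<Longrightarrow> f n x = 0"
  unfolding cochains_def by blast

lemma coch_add: "f \<in> cochains K G p \<Longrightarrow> g \<in> cochains K G p \<Longrightarrow> (\<lambda>n x. f n x + g n x) \<in> cochains K G p"
  unfolding cochains_def using G_add by auto

lemma coch_zero: "(\<lambda>n x. 0) \<in> cochains K G p"
  unfolding cochains_def using G_zero by auto

lemma coch_neg: "f \<in> cochains K G p \<Longrightarrow> (\<lambda>n x. - f n x) \<in> cochains K G p"
  unfolding cochains_def using G_neg by auto

lemma finite_Sig: "finite (Sigma {n. K n \<noteq> {}} K)"
  using K_supp K_fin by (intro finite_SigmaI) auto

lemma finite_coch: "finite (cochains K G p)"
proof -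
  let ?S = "Sigma {n. K n \<noteq> {}} K"
  have "cochains K G p \<subseteq> (\<lambda>g n x. if x \<in> K n then g (n, x) else 0) ` (Pi\<^sub>E ?S (\<lambda>(n, x). G (n - p)))"
  proof
    fix f assume f: "f \<in> cochains K G p"
    let ?g = "\<lambda>(n, x). if (n, x) \<in> ?S then f n x else undefined"
    have "?g \<in> Pi\<^sub>E ?S (\<lambda>(n, x). G (n - p))"
    proof (rule PiE_I)
      fix q assume "q \<in> ?S"
      then obtain n x where q: "q = (n, x)" "x \<in> K n" by auto
      then show "?g q \<in> (\<lambda>(n, x). G (n - p)) q" using coch_in[OF f q(2)] by auto
    next
      fix q assume "q \<notin> ?S"
      then show "?g q = undefined" by (cases q) auto
    qed
    moreover have "f = (\<lambda>n x. if x \<in> K n then ?g (n, x) else 0)"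
      using coch_out[OF f] by (intro ext) auto
    ultimately show "f \<in> (\<lambda>g n x. if x \<in> K n then g (n, x) else 0) ` (Pi\<^sub>E ?S (\<lambda>(n, x). G (n - p)))" by blast
  qed
  moreover have "finite (Pi\<^sub>E ?S (\<lambda>(n, x). G (n - p)))"
    using finite_Sig G_fin by (intro finite_PiE) auto
  ultimately show ?thesis using finite_subset by blast
qed

lemma compC_in: "f \<in> cochains K G p \<Longrightarrow> compC K dC n f x \<in> G (n - 1 - p)"
  unfolding compC_def by (intro G_sum zsmul_G coch_in) auto

lemma compC_add: "compC K dC n (\<lambda>n x. f n x + g n x) x = compC K dC n f x + compC K dC n g x"
  unfolding compC_def by (simp add: zsmul_distrib sum.distrib)

lemma compC_zero: "compC K dC n (\<lambda>n x. 0) x = 0"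
  unfolding compC_def by simp

lemma delta_add:
  assumes "f \<in> cochains K G p" "g \<in> cochains K G p"
  shows "delta K dC dG p (\<lambda>n x. f n x + g n x) = (\<lambda>n x. delta K dC dG p f n x + delta K dC dG p g n x)"
proof (intro ext)
  fix n x
  show "delta K dC dG p (\<lambda>n x. f n x + g n x) n x = delta K dC dG p f n x + delta K dC dG p g n x"
  proof (cases "x \<in> K n")
    case True
    have "dG (n - p) (f n x + g n x) = dG (n - p) (f n x) + dG (n - p) (g n x)"
      using dG_add coch_in[OF assms(1) True] coch_in[OF assms(2) True] by blast
    then show ?thesis unfolding delta_def using True compC_add by (simp add: algebra_simps)
  next
    case False then show ?thesis unfolding delta_def by simp
  qed
qed

lemma delta_zero: "delta K dC dG p (\<lambda>n x. 0) = (\<lambda>n x. 0)"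
  unfolding delta_def by (intro ext) (simp add: compC_zero dG_0)

lemma delta_out: "x \<notin> K n \<Longrightarrow> delta K dC dG p f n x = 0"
  unfolding delta_def by simp

lemma dm_in: assumes "t \<in> Cm" shows "dm t \<in> C0"
  unfolding cochains_def
proof (intro CollectI allI conjI impI)
  fix n x assume x: "x \<in> K n"
  have a: "compC K dC n t x \<in> G n" using compC_in[OF assms, of n x] by simp
  have b: "dG (n + 1) (t n x) \<in> G n" using dG_maps[OF coch_in[OF assms x]] by simp
  show "dm t n x \<in> G (n - 0)" unfolding delta_def using x G_add[OF a b] by simp
next
  fix n x assume "x \<notin> K n" then show "dm t n x = 0" by (rule delta_out)
qed

lemma d0_in: assumes "g \<in> C0" "x \<in> K n" shows "d0 g n x \<in> G (n - 1)"
proof -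
  have a: "compC K dC n g x \<in> G (n - 1)" using compC_in[OF assms(1), of n x] by simp
  have b: "dG n (g n x) \<in> G (n - 1)" using dG_maps[OF coch_in[OF assms]] by simp
  show ?thesis unfolding delta_def using assms(2) G_add[OF a G_neg[OF b]] by simp
qed

lemma dd: assumes t: "t \<in> Cm" shows "d0 (dm t) = (\<lambda>n x. 0)"
proof (intro ext)
  fix n x
  show "d0 (dm t) n x = 0"
  proof (cases "x \<in> K n")
    case False then show ?thesis by (rule delta_out)
  next
    case True
    have n2: "n - 1 - 1 = n - 2" by simp
    have tin: "t (n - 1) y \<in> G n" for y
    proof (cases "y \<in> K (n - 1)")
      case True then show ?thesis using coch_in[OF t True] by simp
    next
      case False then show ?thesis using coch_out[OF t False] G_zero by simp
    qed
    have dmy: "dm t (n - 1) y = compC K dC (n - 1) t y + dG n (t (n - 1) y)" if "y \<in> K (n - 1)" for y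
      unfolding delta_def using that by simp
    have first: "(\<Sum>y\<in>K (n - 1). zsmul (dC n x y) (compC K dC (n - 1) t y)) = 0"
    proof -
      have "(\<Sum>y\<in>K (n - 1). zsmul (dC n x y) (compC K dC (n - 1) t y))
          = (\<Sum>y\<in>K (n - 1). \<Sum>z\<in>K (n - 2). zsmul (dC n x y * dC (n - 1) y z) (t (n - 2) z))"
        unfolding compC_def n2 by (simp add: zsmul_sum zsmul_mult)
      also have "\<dots> = (\<Sum>z\<in>K (n - 2). \<Sum>y\<in>K (n - 1). zsmul (dC n x y * dC (n - 1) y z) (t (n - 2) z))"
        by (rule sum.swap)
      also have "\<dots> = (\<Sum>z\<in>K (n - 2). zsmul (\<Sum>y\<in>K (n - 1). dC n x y * dC (n - 1) y z) (t (n - 2) z))"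
        by (simp add: zsmul_sum_left)
      also have "\<dots> = 0" using dC_sq[OF True] by simp
      finally show ?thesis .
    qed
    have second: "(\<Sum>y\<in>K (n - 1). zsmul (dC n x y) (dG n (t (n - 1) y))) = dG n (compC K dC n t x)"
    proof -
      have "dG n (compC K dC n t x) = (\<Sum>y\<in>K (n - 1). dG n (zsmul (dC n x y) (t (n - 1) y)))"
        unfolding compC_def by (rule dG_sum) (rule zsmul_G[OF tin])
      also have "\<dots> = (\<Sum>y\<in>K (n - 1). zsmul (dC n x y) (dG n (t (n - 1) y)))"
        by (intro sum.cong refl dG_zsmul tin)
      finally show ?thesis by simp
    qed
    have "compC K dC n (dm t) x = (\<Sum>y\<in>K (n - 1). zsmul (dC n x y) (compC K dC (n - 1) t y + dG n (t (n - 1) y)))"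
      unfolding compC_def[of K dC n "dm t" x] using dmy by (intro sum.cong) auto
    also have "\<dots> = dG n (compC K dC n t x)"
      using first second by (simp add: zsmul_distrib sum.distrib)
    finally have c1: "compC K dC n (dm t) x = dG n (compC K dC n t x)" .
    have a: "compC K dC n t x \<in> G n" using compC_in[OF t, of n x] by simp
    have b: "dG (n + 1) (t n x) \<in> G n" using dG_maps[OF coch_in[OF t True]] by simp
    have "dm t n x = compC K dC n t x + dG (n + 1) (t n x)" unfolding delta_def using True by simp
    then have "dG n (dm t n x) = dG n (compC K dC n t x) + dG n (dG (n + 1) (t n x))"
      using dG_add[OF a b] by simp
    also have "dG n (dG (n + 1) (t n x)) = 0" using dG_sq[OF coch_in[OF t True]] by simp
    finally have c2: "dG n (dm t n x) = dG n (compC K dC n t x)" by simp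
    show ?thesis unfolding delta_def[of K dC dG 0 "dm t"] using True c1 c2 by simp
  qed
qed

end

context tcx begin

lemma Aop_apply: "Aop K dC dG t \<Psi> g = \<Psi> (\<lambda>n x. g n x - dm t n x)"
  unfolding Aop_def Pop_def by simp

lemma Aop_comp:
  assumes "t1 \<in> Cm" "t2 \<in> Cm"
  shows "Aop K dC dG t1 (Aop K dC dG t2 \<Psi>) = Aop K dC dG (\<lambda>n x. t1 n x + t2 n x) \<Psi>"
proof (intro ext)
  fix g
  have "(\<lambda>n x. (g n x - dm t1 n x) - dm t2 n x) = (\<lambda>n x. g n x - dm (\<lambda>n x. t1 n x + t2 n x) n x)"
    unfolding delta_add[OF assms] by (simp add: algebra_simps)
  then show "Aop K dC dG t1 (Aop K dC dG t2 \<Psi>) g = Aop K dC dG (\<lambda>n x. t1 n x + t2 n x) \<Psi> g"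
    unfolding Aop_apply by simp
qed

lemma avg_inv:
  assumes fin: "finite I" and phi: "\<And>i. i \<in> I \<Longrightarrow> \<phi> i \<in> Cm" and t0: "t0 \<in> Cm"
    and bij: "bij_betw \<sigma> I I" and sig: "\<And>i. i \<in> I \<Longrightarrow> \<phi> (\<sigma> i) = (\<lambda>n x. t0 n x + \<phi> i n x)"
  shows "Aop K dC dG t0 (\<lambda>g. c * (\<Sum>i\<in>I. Aop K dC dG (\<phi> i) \<Psi> g)) = (\<lambda>g. c * (\<Sum>i\<in>I. Aop K dC dG (\<phi> i) \<Psi> g))"
proof (intro ext)
  fix g
  have "Aop K dC dG t0 (\<lambda>g. c * (\<Sum>i\<in>I. Aop K dC dG (\<phi> i) \<Psi> g)) g
      = c * (\<Sum>i\<in>I. Aop K dC dG t0 (Aop K dC dG (\<phi> i) \<Psi>) g)"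
    unfolding Aop_apply by simp
  also have "\<dots> = c * (\<Sum>i\<in>I. Aop K dC dG (\<phi> (\<sigma> i)) \<Psi> g)"
    using Aop_comp[OF t0 phi] sig by simp
  also have "(\<Sum>i\<in>I. Aop K dC dG (\<phi> (\<sigma> i)) \<Psi> g) = (\<Sum>i\<in>I. Aop K dC dG (\<phi> i) \<Psi> g)"
    using sum.reindex_bij_betw[OF bij, of "\<lambda>i. Aop K dC dG (\<phi> i) \<Psi> g"] by simp
  finally show "Aop K dC dG t0 (\<lambda>g. c * (\<Sum>i\<in>I. Aop K dC dG (\<phi> i) \<Psi> g)) g
      = c * (\<Sum>i\<in>I. Aop K dC dG (\<phi> i) \<Psi> g)" .
qed

lemma locdual_in: "x \<in> K n \<Longrightarrow> h \<in> G (n + 1) \<Longrightarrow> locdual h n x \<in> Cm"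
  unfolding cochains_def locdual_def using G_zero by auto

lemma locdual_add: "locdual ((h1::'g) + h2) n x = (\<lambda>m y. locdual h1 n x m y + locdual h2 n x m y)"
  unfolding locdual_def by (intro ext) simp

lemma Ax0_eq: "Ax0 K G dC dG n x \<Psi> = (\<lambda>g. (1 / of_nat (card (G (n + 1)))) *
      (\<Sum>h\<in>G (n + 1). Aop K dC dG (locdual h n x) \<Psi> g))"
  unfolding Ax0_def by simp

lemma Ax_loc:
  assumes x: "x \<in> K n" and fix_: "Ax0 K G dC dG n x \<Psi> = \<Psi>" and h0: "h0 \<in> G (n + 1)"
  shows "Aop K dC dG (locdual h0 n x) \<Psi> = \<Psi>"
proof -
  have "Aop K dC dG (locdual h0 n x) (Ax0 K G dC dG n x \<Psi>) = Ax0 K G dC dG n x \<Psi>"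
    unfolding Ax0_eq
  proof (rule avg_inv[where \<sigma> = "\<lambda>h. h0 + h"])
    show "finite (G (n + 1))" by (rule G_fin)
    show "\<And>i. i \<in> G (n + 1) \<Longrightarrow> locdual i n x \<in> Cm" by (rule locdual_in[OF x])
    show "locdual h0 n x \<in> Cm" by (rule locdual_in[OF x h0])
    show "bij_betw ((+) h0) (G (n + 1)) (G (n + 1))"
    proof (rule bij_betw_byWitness[where f' = "\<lambda>h. - h0 + h"])
      show "\<forall>a\<in>G (n + 1). - h0 + (h0 + a) = a" by (simp add: add.assoc[symmetric])
      show "\<forall>a'\<in>G (n + 1). h0 + (- h0 + a') = a'" by (simp add: add.assoc[symmetric])
      show "(+) h0 ` G (n + 1) \<subseteq> G (n + 1)" using G_add[OF h0] by auto
      show "(\<lambda>h. - h0 + h) ` G (n + 1) \<subseteq> G (n + 1)" using G_add[OF G_neg[OF h0]] by auto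
    qed
    show "\<And>i. i \<in> G (n + 1) \<Longrightarrow> locdual (h0 + i) n x = (\<lambda>na xa. locdual h0 n x na xa + locdual i n x na xa)"
      by (rule locdual_add)
  qed
  then show ?thesis using fix_ by simp
qed

lemma Cm_decomp:
  assumes inv: "\<And>n x h. x \<in> K n \<Longrightarrow> h \<in> G (n + 1) \<Longrightarrow> Aop K dC dG (locdual h n x) \<Psi> = \<Psi>"
    and t: "t \<in> Cm"
  shows "Aop K dC dG t \<Psi> = \<Psi>"
proof -
  let ?S = "Sigma {n. K n \<noteq> {}} K"
  define tr where "tr F = (\<lambda>m y. if (m, y) \<in> F then t m y else 0)" for F
  have trC: "tr F \<in> Cm" for F
    unfolding tr_def cochains_def using coch_in[OF t] coch_out[OF t] G_zero by auto
  have "Aop K dC dG (tr F) \<Psi> = \<Psi>" if "finite F" "F \<subseteq> ?S" for F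
    using that
  proof (induction F rule: finite_subset_induct)
    case empty
    have "tr {} = (\<lambda>n x. 0)" unfolding tr_def by simp
    then show ?case by (simp add: Aop_apply delta_zero)
  next
    case (insert q F)
    obtain n x where q: "q = (n, x)" "x \<in> K n" using insert(2) by auto
    have "tr (insert q F) = (\<lambda>m y. locdual (t n x) n x m y + tr F m y)"
      unfolding tr_def locdual_def q(1) using insert(3) q(1) by (intro ext) auto
    then have "Aop K dC dG (tr (insert q F)) \<Psi> = Aop K dC dG (locdual (t n x) n x) (Aop K dC dG (tr F) \<Psi>)"
      using Aop_comp[OF locdual_in[OF q(2)] trC, of "t n x" F] coch_in[OF t q(2)] by simp
    also have "\<dots> = \<Psi>" using insert(4) inv[OF q(2)] coch_in[OF t q(2)] by simp
    finally show ?case .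
  qed
  moreover have "tr ?S = t" unfolding tr_def using coch_out[OF t] by (intro ext) auto
  ultimately show ?thesis using finite_Sig by force
qed

lemma Ax_iff:
  "(\<forall>n x. x \<in> K n \<longrightarrow> Ax0 K G dC dG n x \<Psi> = \<Psi>) \<longleftrightarrow> (\<forall>t\<in>Cm. Aop K dC dG t \<Psi> = \<Psi>)"
proof
  assume "\<forall>n x. x \<in> K n \<longrightarrow> Ax0 K G dC dG n x \<Psi> = \<Psi>"
  then show "\<forall>t\<in>Cm. Aop K dC dG t \<Psi> = \<Psi>" using Ax_loc Cm_decomp by metis
next
  assume a: "\<forall>t\<in>Cm. Aop K dC dG t \<Psi> = \<Psi>"
  show "\<forall>n x. x \<in> K n \<longrightarrow> Ax0 K G dC dG n x \<Psi> = \<Psi>"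
  proof (intro allI impI ext)
    fix n x g assume x: "x \<in> K n"
    have "Ax0 K G dC dG n x \<Psi> g = (1 / of_nat (card (G (n + 1)))) * (\<Sum>h\<in>G (n + 1). \<Psi> g)"
      unfolding Ax0_eq using a locdual_in[OF x] by simp
    also have "\<dots> = \<Psi> g" using G_fin[of "n + 1"] G_zero[of "n + 1"] by (cases "G (n + 1) = {}") auto
    finally show "Ax0 K G dC dG n x \<Psi> g = \<Psi> g" .
  qed
qed

end

context tcx begin

lemma Bx0_apply: "Bx0 K G dC dG n x \<Psi> g = (1 / of_nat (card (G (n - 1)))) *
      ((\<Sum>r\<in>chars (G (n - 1)). r (d0 g n x)) * \<Psi> g)"
  unfolding Bx0_def Bop_def Qop_def locchar_def by (simp add: sum_distrib_right)

lemma Bx0_val: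
  assumes "g \<in> C0" "x \<in> K n"
  shows "Bx0 K G dC dG n x \<Psi> g = (if d0 g n x = 0 then \<Psi> g else 0)"
proof -
  have "(\<Sum>r\<in>chars (G (n - 1)). r (d0 g n x)) = (if d0 g n x = 0 then of_nat (card (G (n - 1))) else 0)"
    by (rule char_sum[OF G_fin sgG d0_in[OF assms]])
  moreover have "card (G (n - 1)) \<noteq> 0" using G_fin G_zero by (metis card_0_eq empty_iff)
  ultimately show ?thesis unfolding Bx0_apply by simp
qed

lemma Bx_iff:
  assumes H: "\<Psi> \<in> Hspace K G"
  shows "(\<forall>n x. x \<in> K n \<longrightarrow> Bx0 K G dC dG n x \<Psi> = \<Psi>) \<longleftrightarrow> (\<forall>g. \<Psi> g \<noteq> 0 \<longrightarrow> d0 g = (\<lambda>n x. 0))"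
proof
  assume a: "\<forall>n x. x \<in> K n \<longrightarrow> Bx0 K G dC dG n x \<Psi> = \<Psi>"
  show "\<forall>g. \<Psi> g \<noteq> 0 \<longrightarrow> d0 g = (\<lambda>n x. 0)"
  proof (intro allI impI ext)
    fix g n x assume nz: "\<Psi> g \<noteq> 0"
    then have g: "g \<in> C0" using H unfolding Hspace_def by blast
    show "d0 g n x = 0"
    proof (cases "x \<in> K n")
      case True
      have "Bx0 K G dC dG n x \<Psi> g = \<Psi> g" using a True by simp
      then show ?thesis using Bx0_val[OF g True] nz by (auto split: if_splits)
    next
      case False then show ?thesis by (rule delta_out)
    qed
  qed
next
  assume a: "\<forall>g. \<Psi> g \<noteq> 0 \<longrightarrow> d0 g = (\<lambda>n x. 0)"
  show "\<forall>n x. x \<in> K n \<longrightarrow> Bx0 K G dC dG n x \<Psi> = \<Psi>"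
  proof (intro allI impI ext)
    fix n x g assume x: "x \<in> K n"
    show "Bx0 K G dC dG n x \<Psi> g = \<Psi> g"
    proof (cases "\<Psi> g = 0")
      case True then show ?thesis unfolding Bx0_apply by simp
    next
      case False
      then have g: "g \<in> C0" using H unfolding Hspace_def by blast
      have "d0 g n x = 0" using a False by simp
      then show ?thesis using Bx0_val[OF g x] by simp
    qed
  qed
qed

definition "H0' = {\<Psi> \<in> Hspace K G. (\<forall>t\<in>Cm. Aop K dC dG t \<Psi> = \<Psi>) \<and> (\<forall>g. \<Psi> g \<noteq> 0 \<longrightarrow> d0 g = (\<lambda>n x. 0))}"

lemma H0_eq: "H0 K G dC dG = H0'"
  unfolding H0_def H0'_def using Ax_iff Bx_iff by blast

lemma A0_apply: "A0 K G dC dG \<Psi> g = (1 / of_nat (card Cm)) * (\<Sum>t\<in>Cm. \<Psi> (\<lambda>n x. g n x - dm t n x))"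
  unfolding A0_def Aop_apply by simp

lemma A0_eq: "A0 K G dC dG \<Psi> = (\<lambda>g. (1 / of_nat (card Cm)) * (\<Sum>t\<in>Cm. Aop K dC dG t \<Psi> g))"
  unfolding A0_def by simp

lemma A0_inv: assumes t0: "t0 \<in> Cm" shows "Aop K dC dG t0 (A0 K G dC dG \<Psi>) = A0 K G dC dG \<Psi>"
  unfolding A0_eq
proof (rule avg_inv[where \<sigma> = "\<lambda>t n x. t0 n x + t n x"])
  show "finite Cm" by (rule finite_coch)
  show "\<And>i. i \<in> Cm \<Longrightarrow> i \<in> Cm" .
  show "t0 \<in> Cm" by fact
  show "bij_betw (\<lambda>t n x. t0 n x + t n x) Cm Cm"
  proof (rule bij_betw_byWitness[where f' = "\<lambda>t n x. - t0 n x + t n x"])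
    show "\<forall>a\<in>Cm. (\<lambda>n x. - t0 n x + (t0 n x + a n x)) = a" by (simp add: add.assoc[symmetric])
    show "\<forall>a'\<in>Cm. (\<lambda>n x. t0 n x + (- t0 n x + a' n x)) = a'" by (simp add: add.assoc[symmetric])
    show "(\<lambda>t n x. t0 n x + t n x) ` Cm \<subseteq> Cm" using coch_add[OF t0] by auto
    show "(\<lambda>t n x. - t0 n x + t n x) ` Cm \<subseteq> Cm" using coch_add[OF coch_neg[OF t0]] by auto
  qed
  show "\<And>i. i \<in> Cm \<Longrightarrow> (\<lambda>n x. t0 n x + i n x) = (\<lambda>n x. t0 n x + i n x)" by simp
qed

lemma card_Cm_pos: "0 < card Cm"
  using finite_coch coch_zero card_gt_0_iff by blast

lemma A0_ket_nz:
  assumes "A0 K G dC dG (ket f) g \<noteq> 0"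
  shows "\<exists>t\<in>Cm. g = (\<lambda>n x. f n x + dm t n x)"
proof (rule ccontr)
  assume na: "\<not> ?thesis"
  have "(\<lambda>n x. g n x - dm t n x) \<noteq> f" if "t \<in> Cm" for t
  proof
    assume e: "(\<lambda>n x. g n x - dm t n x) = f"
    have "g = (\<lambda>n x. f n x + dm t n x)"
    proof (intro ext)
      fix n x have "g n x - dm t n x = f n x" using e by meson
      then show "g n x = f n x + dm t n x" by (simp add: algebra_simps)
    qed
    then show False using na that by blast
  qed
  then have "A0 K G dC dG (ket f) g = 0" unfolding A0_apply ket_def by simp
  then show False using assms by simp
qed

lemma A0_ket_self: "A0 K G dC dG (ket f) f \<noteq> 0"
proof -
  let ?P = "\<lambda>t. (\<lambda>n x. f n x - dm t n x) = f"
  have "(\<Sum>t\<in>Cm. ket f (\<lambda>n x. f n x - dm t n x)) = (\<Sum>t\<in>Cm. if ?P t then 1 else 0)"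
    unfolding ket_def by simp
  also have "\<dots> = (\<Sum>t\<in>{t\<in>Cm. ?P t}. 1)" by (rule sum.inter_filter[OF finite_coch, symmetric])
  also have "\<dots> = of_nat (card {t\<in>Cm. ?P t})" by simp
  finally have e: "(\<Sum>t\<in>Cm. ket f (\<lambda>n x. f n x - dm t n x)) = of_nat (card {t\<in>Cm. ?P t})" .
  have mem: "(\<lambda>n x. 0) \<in> {t\<in>Cm. ?P t}" using coch_zero delta_zero by simp
  have fin: "finite {t\<in>Cm. ?P t}" using finite_coch by simp
  have "card {t\<in>Cm. ?P t} \<noteq> 0" using card_0_eq[OF fin] mem by blast
  then show ?thesis unfolding A0_apply e using card_Cm_pos by simp
qed

end

context tcx begin

lemma part2:
  assumes f: "f \<in> C0"
  shows "A0 K G dC dG (ket f) \<in> H0' \<longleftrightarrow> d0 f = (\<lambda>n x. 0)"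
proof
  assume "A0 K G dC dG (ket f) \<in> H0'"
  then show "d0 f = (\<lambda>n x. 0)" unfolding H0'_def using A0_ket_self[of f] by blast
next
  assume df: "d0 f = (\<lambda>n x. 0)"
  have hs: "A0 K G dC dG (ket f) \<in> Hspace K G"
    unfolding Hspace_def
  proof (intro CollectI allI impI)
    fix g assume g: "g \<notin> C0"
    show "A0 K G dC dG (ket f) g = 0"
    proof (rule ccontr)
      assume "A0 K G dC dG (ket f) g \<noteq> 0"
      then obtain t where t: "t \<in> Cm" "g = (\<lambda>n x. f n x + dm t n x)" using A0_ket_nz by blast
      then have "g \<in> C0" using coch_add[OF f dm_in[OF t(1)]] by simp
      then show False using g by simp
    qed
  qed
  have supp: "d0 g = (\<lambda>n x. 0)" if nz: "A0 K G dC dG (ket f) g \<noteq> 0" for g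
  proof -
    obtain t where t: "t \<in> Cm" "g = (\<lambda>n x. f n x + dm t n x)" using A0_ket_nz[OF nz] by blast
    have "d0 g = (\<lambda>n x. d0 f n x + d0 (dm t) n x)" unfolding t(2) by (rule delta_add[OF f dm_in[OF t(1)]])
    then show ?thesis using df dd[OF t(1)] by simp
  qed
  show "A0 K G dC dG (ket f) \<in> H0'"
    unfolding H0'_def using hs A0_inv supp by blast
qed

lemma H0'_combo:
  assumes A: "finite A" "A \<subseteq> H0'"
  shows "(\<lambda>g. \<Sum>v\<in>A. c v * v g) \<in> H0'"
  unfolding H0'_def
proof (intro CollectI conjI ballI allI impI)
  show "(\<lambda>g. \<Sum>v\<in>A. c v * v g) \<in> Hspace K G"
    unfolding Hspace_def
  proof (intro CollectI allI impI)
    fix g assume "g \<notin> C0"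
    then have vz: "v g = 0" if "v \<in> A" for v using A(2) that unfolding H0'_def Hspace_def by blast
    show "(\<Sum>v\<in>A. c v * v g) = 0" by (intro sum.neutral ballI) (simp add: vz)
  qed
next
  fix t assume t: "t \<in> Cm"
  have e: "Aop K dC dG t v = v" if "v \<in> A" for v using A(2) that t unfolding H0'_def by blast
  have "v (\<lambda>n x. g n x - dm t n x) = v g" if vA: "v \<in> A" for v g
    using fun_cong[OF e[OF vA], of g] unfolding Aop_apply by simp
  then show "Aop K dC dG t (\<lambda>g. \<Sum>v\<in>A. c v * v g) = (\<lambda>g. \<Sum>v\<in>A. c v * v g)"
    unfolding Aop_apply by (intro ext sum.cong) auto
next
  fix g assume "(\<Sum>v\<in>A. c v * v g) \<noteq> 0"
  then obtain v where "v \<in> A" "c v * v g \<noteq> 0" by (meson sum.neutral)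
  then show "d0 g = (\<lambda>n x. 0)" using A(2) unfolding H0'_def by auto
qed

lemma part1: "H0' = cspan ((\<lambda>f. A0 K G dC dG (ket f)) ` {f \<in> C0. d0 f = (\<lambda>n x. 0)})"
proof
  let ?Z = "{f \<in> C0. d0 f = (\<lambda>n x. 0)}"
  have finZ: "finite ?Z" using finite_coch by simp
  show "cspan ((\<lambda>f. A0 K G dC dG (ket f)) ` ?Z) \<subseteq> H0'"
  proof
    fix \<Psi> assume "\<Psi> \<in> cspan ((\<lambda>f. A0 K G dC dG (ket f)) ` ?Z)"
    then obtain A c where A: "finite A" "A \<subseteq> (\<lambda>f. A0 K G dC dG (ket f)) ` ?Z" "\<Psi> = (\<lambda>g. \<Sum>v\<in>A. c v * v g)"
      unfolding cspan_def by blast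
    have "A \<subseteq> H0'" using A(2) part2 by blast
    then show "\<Psi> \<in> H0'" using H0'_combo[OF A(1)] A(3) by simp
  qed
next
  let ?Z = "{f \<in> C0. d0 f = (\<lambda>n x. 0)}"
  let ?a = "\<lambda>f. A0 K G dC dG (ket f)"
  have finZ: "finite ?Z" using finite_coch by simp
  show "H0' \<subseteq> cspan (?a ` ?Z)"
  proof
    fix \<Psi> assume \<Psi>: "\<Psi> \<in> H0'"
    have inv: "\<Psi> (\<lambda>n x. g n x - dm t n x) = \<Psi> g" if tC: "t \<in> Cm" for t g
    proof -
      have e: "(\<lambda>g. \<Psi> (\<lambda>n x. g n x - dm t n x)) = \<Psi>" using \<Psi> tC unfolding H0'_def Aop_apply by blast
      show ?thesis using fun_cong[OF e, of g] by simp
    qed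
    have zero: "\<Psi> h = 0" if "h \<notin> ?Z" for h
      using \<Psi> that unfolding H0'_def Hspace_def by blast
    have rep: "\<Psi> g = (\<Sum>f\<in>?Z. \<Psi> f * ?a f g)" for g
    proof -
      have "(\<Sum>f\<in>?Z. \<Psi> f * ?a f g)
          = (\<Sum>f\<in>?Z. (1 / of_nat (card Cm)) * (\<Sum>t\<in>Cm. \<Psi> f * ket f (\<lambda>n x. g n x - dm t n x)))"
        unfolding A0_apply by (simp add: sum_distrib_left ac_simps)
      also have "\<dots> = (1 / of_nat (card Cm)) * (\<Sum>t\<in>Cm. \<Sum>f\<in>?Z. \<Psi> f * ket f (\<lambda>n x. g n x - dm t n x))"
        by (simp only: sum_distrib_left[symmetric] sum.swap[of _ ?Z Cm])
      also have "(\<Sum>t\<in>Cm. \<Sum>f\<in>?Z. \<Psi> f * ket f (\<lambda>n x. g n x - dm t n x)) = (\<Sum>t\<in>Cm. \<Psi> g)"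
      proof (rule sum.cong[OF refl])
        fix t assume t: "t \<in> Cm"
        let ?h = "\<lambda>n x. g n x - dm t n x"
        have "(\<Sum>f\<in>?Z. \<Psi> f * ket f ?h) = (\<Sum>f\<in>?Z. if ?h = f then \<Psi> ?h else 0)"
          unfolding ket_def by (intro sum.cong) auto
        also have "\<dots> = (if ?h \<in> ?Z then \<Psi> ?h else 0)" using finZ by simp
        also have "\<dots> = \<Psi> ?h" using zero by auto
        also have "\<dots> = \<Psi> g" by (rule inv[OF t])
        finally show "(\<Sum>f\<in>?Z. \<Psi> f * ket f ?h) = \<Psi> g" .
      qed
      also have "(1 / of_nat (card Cm)) * (\<Sum>t\<in>Cm. \<Psi> g) = \<Psi> g" using card_Cm_pos by simp
      finally show ?thesis by simp
    qed
    define c where "c v = (\<Sum>f\<in>{f\<in>?Z. ?a f = v}. \<Psi> f)" for v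
    have "(\<lambda>g. \<Sum>v\<in>?a ` ?Z. c v * v g) = \<Psi>"
    proof (intro ext)
      fix g
      have "(\<Sum>v\<in>?a ` ?Z. c v * v g) = (\<Sum>v\<in>?a ` ?Z. \<Sum>f\<in>{f\<in>?Z. ?a f = v}. \<Psi> f * ?a f g)"
        unfolding c_def sum_distrib_right by (intro sum.cong refl) auto
      also have "\<dots> = (\<Sum>f\<in>?Z. \<Psi> f * ?a f g)"
        using sum.image_gen[OF finZ, of "\<lambda>f. \<Psi> f * ?a f g" ?a] by simp
      finally show "(\<Sum>v\<in>?a ` ?Z. c v * v g) = \<Psi> g" using rep[of g] by simp
    qed
    then show "\<Psi> \<in> cspan (?a ` ?Z)" unfolding cspan_def using finZ by blast
  qed
qed

end

theorem proposition4:
  fixes K :: "int \<Rightarrow> 'k set" and dC :: "int \<Rightarrow> 'k \<Rightarrow> 'k \<Rightarrow> int"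
    and G :: "int \<Rightarrow> 'g::ab_group_add set" and dG :: "int \<Rightarrow> 'g \<Rightarrow> 'g"
  assumes K_fin: "\<And>n. finite (K n)"
    and K_supp: "finite {n. K n \<noteq> {}}"
    and dC_sq: "\<And>n x z. x \<in> K n \<Longrightarrow> z \<in> K (n - 2) \<Longrightarrow>
                 (\<Sum>y\<in>K (n - 1). dC n x y * dC (n - 1) y z) = 0"
    and G_fin: "\<And>n. finite (G n)"
    and G_zero: "\<And>n. 0 \<in> G n"
    and G_add: "\<And>n a b. a \<in> G n \<Longrightarrow> b \<in> G n \<Longrightarrow> a + b \<in> G n"
    and G_neg: "\<And>n a. a \<in> G n \<Longrightarrow> - a \<in> G n"
    and dG_maps: "\<And>n a. a \<in> G n \<Longrightarrow> dG n a \<in> G (n - 1)"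
    and dG_add: "\<And>n a b. a \<in> G n \<Longrightarrow> b \<in> G n \<Longrightarrow> dG n (a + b) = dG n a + dG n b"
    and dG_sq: "\<And>n a. a \<in> G n \<Longrightarrow> dG (n - 1) (dG n a) = 0"
  shows "H0 K G dC dG = cspan ((\<lambda>f. A0 K G dC dG (ket f)) `
                          {f \<in> cochains K G 0. delta K dC dG 0 f = (\<lambda>n x. 0)})
       \<and> (\<forall>f \<in> cochains K G 0.
            A0 K G dC dG (ket f) \<in> H0 K G dC dG \<longleftrightarrow> delta K dC dG 0 f = (\<lambda>n x. 0))"
proof -
  interpret tcx K dC G dG
    by (rule tcx.intro) (fact K_fin K_supp dC_sq G_fin G_zero G_add G_neg dG_maps dG_add dG_sq)+
  show ?thesis using H0_eq part1 part2 by simp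
qed


end
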